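(* There exist $b_1,b_2\in L^\infty_{loc}(\mathbb{R})$ such that $S_2(b_1,b_2)+T_2(b_1,b_2)<\infty$, but $S_{A,B}(b_1,b_2)=\infty$ and $T_C(b_1,b_2)=\infty$ for all Young functions $A,B,C$ with $\bar A,\bar B,\bar C\in B_2$. Moreover, the commutator $C_bH=[b_2,[b_1,H]]$ is not bounded on $L^2(\mathbb{R})$.
   Context: $H$ is the Hilbert transform $Hf(x)=\lim_{\varepsilon\to0}\int_{|x-y|>\varepsilon}\frac{f(y)}{x-y}dy$; $[A,B]=AB-BA$ with $b_i$ acting by multiplication. A Young function is a continuous, convex, strictly increasing $A:[0,\infty)\to[0,\infty)$ with $A(0)=0$ and $A(t)/t\to\infty$; $\bar A(t)=\sup_{s>0}\{st-A(s)\}$; $A\in B_2$ means $\int_1^\infty\frac{A(t)}{t^2}\frac{dt}{t}<\infty$; $\langle|f|\rangle_{A,I}=\inf\{\lambda>0:\frac1{|I|}\int_IA(|f|/\lambda)\le1\}$. With $\langle g\rangle_I=\frac1{|I|}\int_Ig$ and suprema over all intervals $I\subset\mathbb{R}$: $S_2(b_1,b_2)=\sup_I\big(\frac1{|I|}\int_I|b_1-\langle b_1\rangle_I|^2\big)^{1/2}\big(\frac1{|I|}\int_I|b_2-\langle b_2\rangle_I|^2\big)^{1/2}$, $T_2(b_1,b_2)=\sup_I\big(\frac1{|I|}\int_I|b_1-\langle b_1\rangle_I|^2|b_2-\langle b_2\rangle_I|^2\big)^{1/2}$, $S_{A,B}(b_1,b_2)=\sup_I\langle|b_1-\langle b_1\rangle_I|\rangle_{A,I}\langle|b_2-\langle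 b_2\rangle_I|\rangle_{B,I}$, $T_C(b_1,b_2)=\sup_I\langle|b_1-\langle b_1\rangle_I||b_2-\langle b_2\rangle_I|\rangle_{C,I}$. *)

theory Defs
  imports "HOL-Analysis.Analysis"
begin

definition young :: "(real \<Rightarrow> real) \<Rightarrow> bool" where
  "young A \<longleftrightarrow> continuous_on {0..} A \<and> convex_on {0..} A \<and> strict_mono_on {0..} A
      \<and> A 0 = 0 \<and> filterlim (\<lambda>t. A t / t) at_top at_top"

definition conj_young :: "(real \<Rightarrow> real) \<Rightarrow> real \<Rightarrow> real" where
  "conj_young A t = Sup {s * t - A s | s. s > 0}"

definition B2 :: "(real \<Rightarrow> real) \<Rightarrow> bool" where
  "B2 A \<longleftrightarrow> (\<integral>\<^sup>+ t \<in> {1..}. ennreal (A t / t ^ 2 / t) \<partial>lborel) < \<infinity>"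

definition avg :: "real \<Rightarrow> real \<Rightarrow> (real \<Rightarrow> real) \<Rightarrow> real" where
  "avg a b g = (LINT y:{a..b}|lborel. g y) / (b - a)"

definition osc :: "real \<Rightarrow> real \<Rightarrow> (real \<Rightarrow> real) \<Rightarrow> real \<Rightarrow> real" where
  "osc a b g x = \<bar>g x - avg a b g\<bar>"

text \<open>Luxemburg average of |f| over [a,b]; infimum of empty set is infinity.\<close>
definition lux :: "(real \<Rightarrow> real) \<Rightarrow> real \<Rightarrow> real \<Rightarrow> (real \<Rightarrow> real) \<Rightarrow> ereal" where
  "lux A a b f = Inf {ereal l | l. l > 0 \<and> avg a b (\<lambda>x. A (\<bar>f x\<bar> / l)) \<le> 1}"

definition S2 :: "(real \<Rightarrow> real) \<Rightarrow> (real \<Rightarrow> real) \<Rightarrow> ereal" where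
  "S2 b1 b2 = (SUP (a, b) \<in> {(a, b). a < b}.
     ereal (sqrt (avg a b (\<lambda>x. (osc a b b1 x)\<^sup>2)) * sqrt (avg a b (\<lambda>x. (osc a b b2 x)\<^sup>2))))"

definition T2 :: "(real \<Rightarrow> real) \<Rightarrow> (real \<Rightarrow> real) \<Rightarrow> ereal" where
  "T2 b1 b2 = (SUP (a, b) \<in> {(a, b). a < b}.
     ereal (sqrt (avg a b (\<lambda>x. (osc a b b1 x)\<^sup>2 * (osc a b b2 x)\<^sup>2))))"

definition SAB :: "(real \<Rightarrow> real) \<Rightarrow> (real \<Rightarrow> real) \<Rightarrow> (real \<Rightarrow> real) \<Rightarrow> (real \<Rightarrow> real) \<Rightarrow> ereal" where
  "SAB A B b1 b2 = (SUP (a, b) \<in> {(a, b). a < b}. lux A a b (osc a b b1) * lux B a b (osc a b b2))"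

definition TC :: "(real \<Rightarrow> real) \<Rightarrow> (real \<Rightarrow> real) \<Rightarrow> (real \<Rightarrow> real) \<Rightarrow> ereal" where
  "TC C b1 b2 = (SUP (a, b) \<in> {(a, b). a < b}. lux C a b (\<lambda>x. osc a b b1 x * osc a b b2 x))"

definition Linf_loc :: "(real \<Rightarrow> real) \<Rightarrow> bool" where
  "Linf_loc b \<longleftrightarrow> b \<in> borel_measurable lborel \<and>
     (\<forall>a c. \<exists>M. AE x in lborel. x \<in> {a..c} \<longrightarrow> \<bar>b x\<bar> \<le> M)"

text \<open>Hilbert transform as principal value (no 1/pi normalisation, as in the paper).\<close>
definition hilbert :: "(real \<Rightarrow> real) \<Rightarrow> real \<Rightarrow> real" where
  "hilbert f x = Lim (at_right 0) (\<lambda>\<epsilon>. LINT y:{y. \<epsilon> < \<bar>x - y\<bar>}|lborel. f y / (x - y))"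

definition comm :: "(real \<Rightarrow> real) \<Rightarrow> ((real \<Rightarrow> real) \<Rightarrow> real \<Rightarrow> real) \<Rightarrow> (real \<Rightarrow> real) \<Rightarrow> real \<Rightarrow> real" where
  "comm b T f x = b x * T f x - T (\<lambda>y. b y * f y) x"

end

theory Submission
  imports Defs
begin


lemma young_nonneg: "young A \<Longrightarrow> 0 \<le> t \<Longrightarrow> 0 \<le> A t"
  unfolding young_def strict_mono_on_def
  by (metis atLeast_iff less_eq_real_def order_refl)

lemma young_mono: "young A \<Longrightarrow> 0 \<le> s \<Longrightarrow> s \<le> t \<Longrightarrow> A s \<le> A t"
  unfolding young_def strict_mono_on_def
  by (metis atLeast_iff less_eq_real_def order_trans)

lemma conj_bdd:
  assumes y: "young A"
  shows "bdd_above {s * t - A s | s. s > 0}"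
proof -
  have "filterlim (\<lambda>t. A t / t) at_top at_top" using y unfolding young_def by blast
  then have "eventually (\<lambda>s. \<bar>t\<bar> \<le> A s / s) at_top"
    by (simp add: filterlim_at_top)
  then obtain S where S: "\<And>s. s \<ge> S \<Longrightarrow> \<bar>t\<bar> \<le> A s / s"
    by (auto simp: eventually_at_top_linorder)
  show ?thesis
  proof (rule bdd_aboveI[where M="\<bar>S\<bar> * \<bar>t\<bar>"], clarify)
    fix s :: real assume s: "s > 0"
    show "s * t - A s \<le> \<bar>S\<bar> * \<bar>t\<bar>"
    proof (cases "s \<ge> S")
      case True
      then have "\<bar>t\<bar> * s \<le> A s" using S[OF True] s by (simp add: pos_le_divide_eq)
      moreover have "s * t \<le> s * \<bar>t\<bar>" using s by (simp add: mult_left_mono)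
      ultimately show ?thesis by (simp add: mult.commute) (smt (verit) mult_nonneg_nonneg abs_ge_zero)
    next
      case False
      have "s * t \<le> s * \<bar>t\<bar>" using s by (simp add: mult_left_mono)
      also have "\<dots> \<le> \<bar>S\<bar> * \<bar>t\<bar>" using False s by (intro mult_right_mono) auto
      finally show ?thesis using young_nonneg[OF y, of s] s by linarith
    qed
  qed
qed

lemma conj_ge: "young A \<Longrightarrow> s > 0 \<Longrightarrow> s * t - A s \<le> conj_young A t"
  unfolding conj_young_def by (rule cSup_upper) (auto intro: conj_bdd)

lemma conj_mono: assumes "young A" shows "mono (conj_young A)"
proof (rule monoI)
  fix t t' :: real assume "t \<le> t'"
  show "conj_young A t \<le> conj_young A t'"
    unfolding conj_young_def[of A t]
  proof (rule cSup_least)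
    show "{s * t - A s |s. 0 < s} \<noteq> {}" by (auto intro: exI[of _ 1])
    fix x assume "x \<in> {s * t - A s |s. 0 < s}"
    then obtain s where "s > 0" "x = s * t - A s" by auto
    then show "x \<le> conj_young A t'"
      using conj_ge[OF assms \<open>s > 0\<close>, of t'] \<open>t \<le> t'\<close>
      by (smt (verit) mult_left_mono)
  qed
qed



lemma superquad:
  assumes y: "young A" and b: "B2 (conj_young A)" and K: "K > 0"
  shows "\<exists>t0>0. \<forall>s\<ge>t0. K * s^2 \<le> A s"
proof (rule ccontr)
  assume "\<not> ?thesis"
  then have H: "\<And>t0. t0 > 0 \<Longrightarrow> \<exists>s\<ge>t0. A s < K * s^2" by (auto simp: not_le)
  define g where "g u = ennreal (conj_young A u / u^2 / u)" for u
  define c where "c = 1/(32*K)"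
  have c0: "c > 0" using K by (simp add: c_def)
  have cm: "conj_young A \<in> borel_measurable borel"
    by (rule borel_measurable_mono[OF conj_mono[OF y]])
  have gm[measurable]: "g \<in> borel_measurable lborel"
    unfolding g_def using cm by (simp add: measurable_lborel1)
  have step: "\<exists>t\<ge>T. ennreal c \<le> (\<integral>\<^sup>+ u\<in>{t<..2*t}. g u \<partial>lborel)" if T: "T \<ge> 1" for T
  proof -
    have m0: "max T (T/(2*K)) > 0" using T by auto
    obtain s where s: "s \<ge> max T (T/(2*K))" "A s < K * s^2"
      using H[OF m0] by blast
    have s0: "s > 0" using s T by auto
    define t where "t = 2 * K * s"
    have tT: "t \<ge> T" using s K unfolding t_def by (auto simp: field_simps)
    have t0: "t > 0" using s0 K by (simp add: t_def)
    have gl: "ennreal (c/t) * indicator {t<..2*t} u \<le> g u * indicator {t<..2*t} u" for u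
    proof (cases "u \<in> {t<..2*t}")
      case True
      then have u: "t < u" "u \<le> 2*t" by auto
      have "s * u - A s \<le> conj_young A u" by (rule conj_ge[OF y s0])
      moreover have "s * t \<le> s * u" using u s0 by simp
      moreover have "s * t - A s \<ge> t^2/(4*K)"
        using s(2) K unfolding t_def by (simp add: power2_eq_square field_simps)
      ultimately have cu: "conj_young A u \<ge> t^2/(4*K)" by linarith
      have u3: "u^2 * u \<le> 8 * t^3" using u t0
      proof -
        have "u^3 \<le> (2*t)^3" using u t0 by (intro power_mono) auto
        then show ?thesis by (simp add: power2_eq_square power3_eq_cube)
      qed
      have "c / t = (t^2/(4*K)) / (8*t^3)" using t0 K by (simp add: c_def power2_eq_square power3_eq_cube field_simps)
      also have "\<dots> \<le> conj_young A u / (u^2 * u)"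
      proof (rule frac_le)
        have "0 \<le> t^2/(4*K)" using K by simp
        then show "0 \<le> conj_young A u" using cu by linarith
      qed (use cu u3 u t0 K in auto)
      finally show ?thesis using True by (simp add: g_def ennreal_leI)
    qed simp
    have e1: "ennreal (c/t) * ennreal t = ennreal (c/t*t)"
      by (rule ennreal_mult''[symmetric]) (use t0 in simp)
    have "ennreal c = ennreal (c/t) * emeasure lborel {t<..2*t}"
      using t0 by (simp add: e1)
    also have "\<dots> = (\<integral>\<^sup>+ u. ennreal (c/t) * indicator {t<..2*t} u \<partial>lborel)"
      by (simp add: nn_integral_cmult_indicator)
    also have "\<dots> \<le> (\<integral>\<^sup>+ u\<in>{t<..2*t}. g u \<partial>lborel)"
      by (intro nn_integral_mono) (use gl in auto)
    finally show ?thesis using tT by blast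
  qed
  have ind: "\<exists>T\<ge>1. ennreal (real n * c) \<le> (\<integral>\<^sup>+ u\<in>{1..T}. g u \<partial>lborel)" for n
  proof (induction n)
    case 0 then show ?case by (auto intro: exI[of _ 1])
  next
    case (Suc n)
    then obtain T where T: "T \<ge> 1" "ennreal (real n * c) \<le> (\<integral>\<^sup>+ u\<in>{1..T}. g u \<partial>lborel)" by blast
    obtain t where t: "t \<ge> T" "ennreal c \<le> (\<integral>\<^sup>+ u\<in>{t<..2*t}. g u \<partial>lborel)" using step[OF T(1)] by blast
    have "ennreal (real (Suc n) * c) = ennreal (real n * c) + ennreal c"
      using c0 by (subst ennreal_plus[symmetric]) (auto simp: algebra_simps)
    also have "\<dots> \<le> (\<integral>\<^sup>+ u\<in>{1..T}. g u \<partial>lborel) + (\<integral>\<^sup>+ u\<in>{t<..2*t}. g u \<partial>lborel)"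
      using T t by (intro add_mono) auto
    also have "\<dots> = (\<integral>\<^sup>+ u\<in>{1..T} \<union> {t<..2*t}. g u \<partial>lborel)"
      using t by (intro nn_integral_disjoint_pair[symmetric]) auto
    also have "\<dots> \<le> (\<integral>\<^sup>+ u\<in>{1..2*t}. g u \<partial>lborel)"
      using t T by (intro nn_integral_mono) (auto split: split_indicator intro: mult_left_mono)
    finally show ?case using t T by (intro exI[of _ "2*t"]) auto
  qed
  have fin: "(\<integral>\<^sup>+ u\<in>{1..}. g u \<partial>lborel) < \<infinity>"
    using b unfolding B2_def g_def by simp
  then obtain X where X: "(\<integral>\<^sup>+ u\<in>{1..}. g u \<partial>lborel) = ennreal X" "X \<ge> 0"
    using fin by (cases "(\<integral>\<^sup>+ u\<in>{1..}. g u \<partial>lborel)" rule: ennreal_cases) auto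
  obtain n :: nat where n: "real n > X / c" using reals_Archimedean2 by blast
  obtain T where T: "T \<ge> 1" "ennreal (real n * c) \<le> (\<integral>\<^sup>+ u\<in>{1..T}. g u \<partial>lborel)" using ind by blast
  note T(2)
  also have "\<dots> \<le> (\<integral>\<^sup>+ u\<in>{1..}. g u \<partial>lborel)"
    by (intro nn_integral_mono) (auto split: split_indicator)
  finally have "real n * c \<le> X" using X by (simp add: ennreal_le_iff)
  then show False using n c0 by (simp add: field_simps)
qed



definition bb1 :: "real \<Rightarrow> real" where "bb1 x = sqrt (max x 0)"
definition bb2 :: "real \<Rightarrow> real" where "bb2 x = indicator {0..1::real} x"

lemma bb1_meas[measurable]: "bb1 \<in> borel_measurable borel"
  unfolding bb1_def by measurable

lemma bb2_meas[measurable]: "bb2 \<in> borel_measurable borel"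
  unfolding bb2_def by measurable

lemma bb1_cont: "isCont bb1 x"
  unfolding bb1_def by (intro continuous_intros)

lemma bb1_mono: "x \<le> y \<Longrightarrow> bb1 x \<le> bb1 y"
  unfolding bb1_def by simp

lemma bb1_diff: assumes "a \<le> b" shows "bb1 b - bb1 a \<le> sqrt (b - a)"
proof -
  have "sqrt (max b 0) \<le> sqrt (max a 0) + sqrt (max b 0 - max a 0)"
    using sqrt_add_le_add_sqrt[of "max a 0" "max b 0 - max a 0"] assms by simp
  also have "sqrt (max b 0 - max a 0) \<le> sqrt (b - a)" using assms by simp
  finally show ?thesis unfolding bb1_def by simp
qed

lemma si_bdd:
  fixes f :: "real \<Rightarrow> real"
  assumes "f \<in> borel_measurable borel" "\<And>x. x \<in> {a..b} \<Longrightarrow> \<bar>f x\<bar> \<le> M"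
  shows "set_integrable lborel {a..b} f"
  unfolding set_integrable_def
proof (rule integrableI_bounded_set_indicator[where B=M])
  show "emeasure lborel {a..b} < \<infinity>" by (cases "a \<le> b") auto
qed (use assms in auto)

lemma avg_const: "a < b \<Longrightarrow> avg a b (\<lambda>_. c) = c"
  unfolding avg_def by (simp add: set_integral_const)

lemma lint_mono_const:
  fixes f :: "real \<Rightarrow> real"
  assumes "a < b" "f \<in> borel_measurable borel" "\<And>x. x \<in> {a..b} \<Longrightarrow> \<bar>f x\<bar> \<le> M"
    "\<And>x. x \<in> {a..b} \<Longrightarrow> f x \<le> c"
  shows "avg a b f \<le> c"
proof -
  have "(LINT x:{a..b}|lborel. f x) \<le> (LINT x:{a..b}|lborel. c)"
  proof (rule set_integral_mono)
    show "set_integrable lborel {a..b} f" using assms by (intro si_bdd[where M=M]) auto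
    show "set_integrable lborel {a..b} (\<lambda>_. c)" by (intro si_bdd[where M="\<bar>c\<bar>"]) auto
  qed (use assms in auto)
  then show ?thesis using assms(1) unfolding avg_def by (simp add: set_integral_const divide_le_eq mult.commute)
qed

lemma lint_mono_const2:
  fixes f :: "real \<Rightarrow> real"
  assumes "a < b" "f \<in> borel_measurable borel" "\<And>x. x \<in> {a..b} \<Longrightarrow> \<bar>f x\<bar> \<le> M"
    "\<And>x. x \<in> {a..b} \<Longrightarrow> c \<le> f x"
  shows "c \<le> avg a b f"
proof -
  have "(LINT x:{a..b}|lborel. c) \<le> (LINT x:{a..b}|lborel. f x)"
  proof (rule set_integral_mono)
    show "set_integrable lborel {a..b} f" using assms by (intro si_bdd[where M=M]) auto
    show "set_integrable lborel {a..b} (\<lambda>_. c)" by (intro si_bdd[where M="\<bar>c\<bar>"]) auto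
  qed (use assms in auto)
  then show ?thesis using assms(1) unfolding avg_def by (simp add: set_integral_const le_divide_eq mult.commute)
qed

lemma osc1_bound:
  assumes ab: "a < b" and x: "x \<in> {a..b}"
  shows "\<bar>osc a b bb1 x\<bar> \<le> sqrt (b - a)"
proof -
  have bnd: "\<And>y. y \<in> {a..b} \<Longrightarrow> \<bar>bb1 y\<bar> \<le> bb1 b"
    using bb1_mono by (auto simp: bb1_def)
  have lo: "bb1 a \<le> avg a b bb1"
    by (rule lint_mono_const2[OF ab bb1_meas bnd]) (auto intro: bb1_mono)
  have hi: "avg a b bb1 \<le> bb1 b"
    by (rule lint_mono_const[OF ab bb1_meas bnd]) (auto intro: bb1_mono)
  have "bb1 a \<le> bb1 x" "bb1 x \<le> bb1 b" using x by (auto intro: bb1_mono)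
  then have "\<bar>osc a b bb1 x\<bar> \<le> bb1 b - bb1 a" using lo hi unfolding osc_def by auto
  also have "\<dots> \<le> sqrt (b - a)" using bb1_diff ab by simp
  finally show ?thesis .
qed



lemma osc_meas[measurable]: "g \<in> borel_measurable borel \<Longrightarrow> osc a b g \<in> borel_measurable borel"
  unfolding osc_def by (auto intro!: borel_measurable_abs borel_measurable_diff)

lemma m_eq: "(LINT x:{a..b}|lborel. bb2 x) = measure lborel ({a..b} \<inter> {0..1})"
proof -
  have "(\<lambda>x. indicator {a..b} x *\<^sub>R bb2 x) = indicator ({a..b} \<inter> {0..1})"
    by (auto simp: bb2_def split: split_indicator)
  then show ?thesis unfolding set_lebesgue_integral_def by simp
qed

lemma m_bounds:
  assumes "a < b"
  shows "0 \<le> (LINT x:{a..b}|lborel. bb2 x)" "(LINT x:{a..b}|lborel. bb2 x) \<le> 1"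
    "(LINT x:{a..b}|lborel. bb2 x) \<le> b - a"
proof -
  show "0 \<le> (LINT x:{a..b}|lborel. bb2 x)" by (simp add: m_eq)
  have "measure lborel ({a..b} \<inter> {0..1}) \<le> measure lborel {0..1::real}"
    by (rule measure_mono_fmeasurable) (auto simp: fmeasurable_def)
  then show "(LINT x:{a..b}|lborel. bb2 x) \<le> 1" by (simp add: m_eq)
  have "measure lborel ({a..b} \<inter> {0..1}) \<le> measure lborel {a..b}"
    by (rule measure_mono_fmeasurable) (use assms in \<open>auto simp: fmeasurable_def\<close>)
  then show "(LINT x:{a..b}|lborel. bb2 x) \<le> b - a" using assms by (simp add: m_eq)
qed

lemma osc2_int:
  assumes ab: "a < b"
  defines "m \<equiv> (LINT x:{a..b}|lborel. bb2 x)"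
  shows "(LINT x:{a..b}|lborel. (osc a b bb2 x)^2) = m - m^2/(b-a)"
proof -
  define \<mu> where "\<mu> = m / (b - a)"
  have mu: "avg a b bb2 = \<mu>" unfolding avg_def \<mu>_def m_def ..
  have pt: "(osc a b bb2 x)^2 = bb2 x * (1 - 2*\<mu>) + \<mu>^2" for x
    unfolding osc_def mu by (auto simp: bb2_def power2_eq_square algebra_simps split: split_indicator)
  have i2: "set_integrable lborel {a..b} bb2" by (rule si_bdd[where M=1]) (auto simp: bb2_def)
  have ic: "set_integrable lborel {a..b} (\<lambda>_. \<mu>^2)" by (rule si_bdd[where M="\<mu>^2"]) auto
  have "(LINT x:{a..b}|lborel. (osc a b bb2 x)^2) = (LINT x:{a..b}|lborel. bb2 x * (1 - 2*\<mu>) + \<mu>^2)"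
    by (simp add: pt)
  also have "\<dots> = (LINT x:{a..b}|lborel. bb2 x * (1 - 2*\<mu>)) + (LINT x:{a..b}|lborel. \<mu>^2)"
    by (rule set_integral_add(2)) (use i2 ic in auto)
  also have "\<dots> = m * (1 - 2*\<mu>) + (b - a) * \<mu>^2"
    using ab by (simp add: set_integral_const m_def)
  also have "\<dots> = m - m^2/(b-a)"
  proof -
    have "\<And>r. r > 0 \<Longrightarrow> m * (1 - 2*(m/r)) + r * (m/r)^2 = m - m^2/r"
      by (simp add: field_simps power2_eq_square)
    then show ?thesis using ab unfolding \<mu>_def by simp
  qed
  finally show ?thesis .
qed

lemma osc2_bound: "a < b \<Longrightarrow> \<bar>osc a b bb2 x\<bar> \<le> 2"
proof -
  assume ab: "a < b"
  have "0 \<le> avg a b bb2" "avg a b bb2 \<le> 1"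
    using m_bounds[OF ab] ab unfolding avg_def by auto
  then show ?thesis unfolding osc_def by (auto simp: bb2_def split: split_indicator)
qed

lemma S2T2_pt:
  assumes ab: "a < b"
  shows "sqrt (avg a b (\<lambda>x. (osc a b bb1 x)^2)) * sqrt (avg a b (\<lambda>x. (osc a b bb2 x)^2)) \<le> 1"
    and "sqrt (avg a b (\<lambda>x. (osc a b bb1 x)^2 * (osc a b bb2 x)^2)) \<le> 1"
proof -
  define r where "r = b - a"
  define m where "m = (LINT x:{a..b}|lborel. bb2 x)"
  have r0: "r > 0" using ab by (simp add: r_def)
  have mb: "0 \<le> m" "m \<le> 1" "m \<le> r" using m_bounds[OF ab] by (auto simp: m_def r_def)
  have o1: "(osc a b bb1 x)^2 \<le> r" if "x \<in> {a..b}" for x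
  proof -
    have "\<bar>osc a b bb1 x\<bar> \<le> sqrt r" using osc1_bound[OF ab that] by (simp add: r_def)
    then have "\<bar>osc a b bb1 x\<bar>^2 \<le> (sqrt r)^2" by (intro power_mono) auto
    then show ?thesis using r0 by simp
  qed
  have o2: "(osc a b bb2 x)^2 \<le> 4" for x
  proof -
    have "\<bar>osc a b bb2 x\<bar>^2 \<le> 2^2" using osc2_bound[OF ab] by (intro power_mono) auto
    then show ?thesis by simp
  qed
  have A1: "avg a b (\<lambda>x. (osc a b bb1 x)^2) \<le> r"
    by (rule lint_mono_const[OF ab _ _ o1, where M=r]) (use o1 in auto)
  have A1': "0 \<le> avg a b (\<lambda>x. (osc a b bb1 x)^2)"
    by (rule lint_mono_const2[OF ab, where M=r]) (use o1 in auto)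
  have A2: "avg a b (\<lambda>x. (osc a b bb2 x)^2) = (m - m^2/r) / r"
    unfolding avg_def using osc2_int[OF ab] by (simp add: m_def r_def)
  have A2': "avg a b (\<lambda>x. (osc a b bb2 x)^2) \<le> m / r"
    unfolding A2 using r0 mb by (intro divide_right_mono) auto
  have A2'': "0 \<le> avg a b (\<lambda>x. (osc a b bb2 x)^2)"
    by (rule lint_mono_const2[OF ab, where M=4]) (use o2 in auto)
  have "sqrt (avg a b (\<lambda>x. (osc a b bb1 x)^2)) * sqrt (avg a b (\<lambda>x. (osc a b bb2 x)^2))
        \<le> sqrt r * sqrt (m / r)"
    using A1 A1' A2' A2'' by (intro mult_mono) auto
  also have "\<dots> = sqrt m" using r0 by (simp add: real_sqrt_mult[symmetric])
  also have "\<dots> \<le> 1" using mb by simp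
  finally show "sqrt (avg a b (\<lambda>x. (osc a b bb1 x)^2)) * sqrt (avg a b (\<lambda>x. (osc a b bb2 x)^2)) \<le> 1" .
  have "(LINT x:{a..b}|lborel. (osc a b bb1 x)^2 * (osc a b bb2 x)^2)
       \<le> (LINT x:{a..b}|lborel. r * (osc a b bb2 x)^2)"
  proof (rule set_integral_mono)
    show "set_integrable lborel {a..b} (\<lambda>x. (osc a b bb1 x)^2 * (osc a b bb2 x)^2)"
    proof (rule si_bdd[where M="r * 4"])
      fix x assume "x \<in> {a..b}"
      then show "\<bar>(osc a b bb1 x)^2 * (osc a b bb2 x)^2\<bar> \<le> r * 4"
        using o1 o2 r0 by (simp add: abs_mult) (intro mult_mono, auto)
    qed simp
    show "set_integrable lborel {a..b} (\<lambda>x. r * (osc a b bb2 x)^2)"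
      by (rule si_bdd[where M="r * 4"]) (use o2 r0 in \<open>auto simp: abs_mult\<close>)
    fix x assume "x \<in> {a..b}"
    then show "(osc a b bb1 x)^2 * (osc a b bb2 x)^2 \<le> r * (osc a b bb2 x)^2"
      using o1 by (intro mult_right_mono) auto
  qed
  then have "avg a b (\<lambda>x. (osc a b bb1 x)^2 * (osc a b bb2 x)^2) \<le> r * avg a b (\<lambda>x. (osc a b bb2 x)^2)"
    unfolding avg_def using r0 by (simp add: divide_le_eq r_def mult.commute)
  also have "\<dots> \<le> r * (m / r)" using A2' r0 by (intro mult_left_mono) auto
  also have "\<dots> \<le> 1" using r0 mb by simp
  finally show "sqrt (avg a b (\<lambda>x. (osc a b bb1 x)^2 * (osc a b bb2 x)^2)) \<le> 1" by simp
qed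



lemma lint_ind_lower:
  fixes f :: "real \<Rightarrow> real"
  assumes ab: "a \<le> c" "c \<le> d" "d \<le> b" and fm: "f \<in> borel_measurable borel"
    and fM: "\<And>x. x \<in> {a..b} \<Longrightarrow> \<bar>f x\<bar> \<le> M" and f0: "\<And>x. x \<in> {a..b} \<Longrightarrow> 0 \<le> f x"
    and fv: "\<And>x. x \<in> {c..d} \<Longrightarrow> v \<le> f x" and v0: "0 \<le> v"
  shows "(d - c) * v \<le> (LINT x:{a..b}|lborel. f x)"
proof -
  have "(LINT x:{a..b}|lborel. indicator {c..d} x * v) = (d - c) * v"
  proof -
    have "(\<lambda>x. indicator {a..b} x *\<^sub>R (indicator {c..d} x * v)) = (\<lambda>x. indicator {c..d} x * v)"
      using ab by (auto split: split_indicator)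
    then show ?thesis unfolding set_lebesgue_integral_def using ab by simp
  qed
  moreover have "(LINT x:{a..b}|lborel. indicator {c..d} x * v) \<le> (LINT x:{a..b}|lborel. f x)"
  proof (rule set_integral_mono)
    show "set_integrable lborel {a..b} f" by (rule si_bdd[OF fm fM])
    show "set_integrable lborel {a..b} (\<lambda>x. indicator {c..d} x * v)"
      by (rule si_bdd[where M=v]) (use v0 in \<open>auto split: split_indicator\<close>)
    fix x assume x: "x \<in> {a..b}"
    show "indicator {c..d} x * v \<le> f x"
      using fv f0[OF x] by (auto split: split_indicator)
  qed
  ultimately show ?thesis by linarith
qed

lemma young_comp_meas:
  assumes y: "young A" and hm: "h \<in> borel_measurable borel" and h0: "\<And>x. 0 \<le> h x"
  shows "(\<lambda>x. A (h x)) \<in> borel_measurable borel"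
proof -
  have c: "continuous_on {0..} A" using y unfolding young_def by blast
  have "continuous_on UNIV (\<lambda>y. A (max y 0))"
    by (rule continuous_on_compose2[OF c]) (auto intro!: continuous_intros)
  then have "(\<lambda>x. A (max (h x) 0)) \<in> borel_measurable borel"
    by (rule borel_measurable_continuous_on[OF _ hm])
  moreover have "(\<lambda>x. A (max (h x) 0)) = (\<lambda>x. A (h x))" using h0 by (simp add: max_absorb1)
  ultimately show ?thesis by simp
qed

lemma avg_lower:
  assumes y: "young A" and p: "0 < p" "p \<le> r" and hm: "h \<in> borel_measurable borel"
    and h0: "\<And>x. 0 \<le> h x" and hM: "\<And>x. x \<in> {0..r} \<Longrightarrow> h x \<le> M"
    and hv: "\<And>x. x \<in> {0..p} \<Longrightarrow> v \<le> h x" and v0: "0 \<le> v"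
  shows "p / r * A v \<le> avg 0 r (\<lambda>x. A (h x))"
proof -
  have "(p - 0) * A v \<le> (LINT x:{0..r}|lborel. A (h x))"
  proof (rule lint_ind_lower[where M="A M"])
    show "(\<lambda>x. A (h x)) \<in> borel_measurable borel" by (rule young_comp_meas[OF y hm h0])
    fix x assume x: "x \<in> {0..r}"
    show "\<bar>A (h x)\<bar> \<le> A M" using young_nonneg[OF y h0[of x]] young_mono[OF y h0[of x] hM[OF x]] by simp
    show "0 \<le> A (h x)" by (rule young_nonneg[OF y h0])
  next
    fix x assume x: "x \<in> {0..p}"
    show "A v \<le> A (h x)" by (rule young_mono[OF y v0 hv[OF x]])
  qed (use p young_nonneg[OF y v0] in auto)
  then show ?thesis unfolding avg_def using p by (simp add: divide_right_mono)
qed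

lemma lux_lower:
  assumes "\<And>l. l > 0 \<Longrightarrow> avg a b (\<lambda>x. A (\<bar>f x\<bar> / l)) \<le> 1 \<Longrightarrow> X \<le> l"
  shows "ereal X \<le> lux A a b f"
  unfolding lux_def by (rule Inf_greatest) (use assms in auto)

lemma F1:
  assumes r: "r \<ge> 64" and x: "x \<in> {0..r/64}"
  shows "sqrt r / 4 \<le> osc 0 r bb1 x"
proof -
  have sr: "sqrt (r/4) = sqrt r / 2" "sqrt (r/64) = sqrt r / 8" by (simp_all add: real_sqrt_divide)
  have "(r - r/4) * (sqrt r / 2) \<le> (LINT x:{0..r}|lborel. bb1 x)"
  proof (rule lint_ind_lower[where M="sqrt r"])
    fix y assume "y \<in> {r/4..r}"
    then have "sqrt (r/4) \<le> bb1 y" by (auto simp: bb1_def)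
    then show "sqrt r / 2 \<le> bb1 y" using sr by simp
  qed (use r in \<open>auto simp: bb1_def\<close>)
  then have av: "3 * sqrt r / 8 \<le> avg 0 r bb1" unfolding avg_def using r by (simp add: field_simps)
  have "bb1 x \<le> sqrt (r/64)" using x by (auto simp: bb1_def)
  then have "bb1 x \<le> sqrt r / 8" using sr by simp
  then show ?thesis using av unfolding osc_def by (auto simp: abs_if)
qed

lemma avg_bb2: assumes "r \<ge> 1" shows "avg 0 r bb2 = 1 / r"
proof -
  have "{0..r} \<inter> {0..1} = {0..1::real}" using assms by auto
  then show ?thesis unfolding avg_def m_eq by simp
qed

lemma F2:
  assumes r: "r \<ge> 2" and x: "x \<in> {0..1}"
  shows "1/2 \<le> osc 0 r bb2 x"
proof -
  have "avg 0 r bb2 = 1 / r" using r by (intro avg_bb2) auto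
  moreover have "1/r \<le> 1/2" using r by (simp add: field_simps)
  moreover have "bb2 x = 1" using x by (simp add: bb2_def)
  ultimately show ?thesis unfolding osc_def by (auto simp: abs_if)
qed



lemma lux1:
  assumes y: "young A" and b: "B2 (conj_young A)"
  shows "\<exists>c>0. \<forall>r\<ge>64. ereal (sqrt r / (4*c)) \<le> lux A 0 r (osc 0 r bb1)"
proof -
  obtain t0 where t0: "t0 > 0" "\<And>s. s \<ge> t0 \<Longrightarrow> 1 * s^2 \<le> A s"
    using superquad[OF y b, of 1] by auto
  define c where "c = max t0 9"
  have c0: "c > 0" by (simp add: c_def)
  have "ereal (sqrt r / (4*c)) \<le> lux A 0 r (osc 0 r bb1)" if r: "r \<ge> 64" for r
  proof (rule lux_lower)
    fix l :: real assume l: "l > 0" and av: "avg 0 r (\<lambda>x. A (\<bar>osc 0 r bb1 x\<bar> / l)) \<le> 1"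
    have "(r/64) / r * A (sqrt r / (4*l)) \<le> avg 0 r (\<lambda>x. A (\<bar>osc 0 r bb1 x\<bar> / l))"
    proof (rule avg_lower[OF y, where M="sqrt r / l"])
      fix x :: real assume "x \<in> {0..r}"
      then have "\<bar>osc 0 r bb1 x\<bar> \<le> sqrt (r - 0)" using r by (intro osc1_bound) auto
      then show "\<bar>osc 0 r bb1 x\<bar> / l \<le> sqrt r / l" using l by (simp add: divide_right_mono)
    next
      fix x :: real assume "x \<in> {0..r/64}"
      then have "sqrt r / 4 \<le> osc 0 r bb1 x" using r by (intro F1) auto
      then show "sqrt r / (4*l) \<le> \<bar>osc 0 r bb1 x\<bar> / l" using l
        by (simp add: divide_right_mono flip: divide_divide_eq_left)
    qed (use r l in auto)
    then have Av: "A (sqrt r / (4*l)) \<le> 64" using av r by simp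
    show "sqrt r / (4*c) \<le> l"
    proof (rule ccontr)
      assume "\<not> ?thesis"
      then have "l < sqrt r / (4*c)" by simp
      then have "c < sqrt r / (4*l)" using l c0 by (simp add: field_simps)
      then have v: "sqrt r / (4*l) > t0" "sqrt r / (4*l) > 9" unfolding c_def by auto
      have "81 < (sqrt r / (4*l))^2"
      proof -
        have "9^2 < (sqrt r / (4*l))^2" using v(2) by (intro power_strict_mono) auto
        then show ?thesis by simp
      qed
      also have "\<dots> \<le> A (sqrt r / (4*l))" using t0(2)[of "sqrt r / (4*l)"] v by simp
      finally show False using Av by simp
    qed
  qed
  then show ?thesis using c0 by blast
qed

lemma lux2:
  assumes y: "young B" and K: "K > 0" and t0: "t0 > 0" "\<And>s. s \<ge> t0 \<Longrightarrow> K * s^2 \<le> B s"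
    and r: "r \<ge> 2" "r \<ge> K * t0^2"
  shows "ereal (sqrt K / (2 * sqrt r)) \<le> lux B 0 r (osc 0 r bb2)"
proof (rule lux_lower)
  fix l :: real assume l: "l > 0" and av: "avg 0 r (\<lambda>x. B (\<bar>osc 0 r bb2 x\<bar> / l)) \<le> 1"
  have "1 / r * B (1 / (2*l)) \<le> avg 0 r (\<lambda>x. B (\<bar>osc 0 r bb2 x\<bar> / l))"
  proof (rule avg_lower[OF y, where M="2 / l"])
    fix x :: real assume "x \<in> {0..r}"
    have "\<bar>osc 0 r bb2 x\<bar> \<le> 2" using r by (intro osc2_bound) auto
    then show "\<bar>osc 0 r bb2 x\<bar> / l \<le> 2 / l" using l by (simp add: divide_right_mono)
  next
    fix x :: real assume "x \<in> {0..1}"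
    then have "1/2 \<le> osc 0 r bb2 x" using r by (intro F2) auto
    then show "1 / (2*l) \<le> \<bar>osc 0 r bb2 x\<bar> / l" using l
      by (simp add: divide_right_mono flip: divide_divide_eq_left)
  qed (use r l in auto)
  then have "B (1 / (2*l)) \<le> r * avg 0 r (\<lambda>x. B (\<bar>osc 0 r bb2 x\<bar> / l))" using r by (simp add: field_simps)
  also have "\<dots> \<le> r * 1" using av r by (intro mult_left_mono) auto
  finally have Bv: "B (1 / (2*l)) \<le> r" by simp
  have sr: "sqrt K / (2 * sqrt r) = sqrt (K / (4 * r))"
    using r by (simp add: real_sqrt_divide real_sqrt_mult)
  show "sqrt K / (2 * sqrt r) \<le> l"
  proof (cases "1 / (2*l) \<ge> t0")
    case True
    have "K * (1/(2*l))^2 \<le> r" using t0(2)[OF True] Bv by simp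
    then have "K / (4 * r) \<le> l^2" using l r by (simp add: field_simps power2_eq_square)
    then have "sqrt (K / (4 * r)) \<le> sqrt (l^2)" by (rule real_sqrt_le_mono)
    then show ?thesis using sr l by simp
  next
    case False
    then have l2: "1 / (2 * t0) < l" using l t0 by (simp add: field_simps)
    have "sqrt (K * t0^2) \<le> sqrt r" using r by simp
    then have "sqrt K * t0 \<le> sqrt r" using t0 by (simp add: real_sqrt_mult)
    then have "sqrt K / (2 * sqrt r) \<le> 1 / (2 * t0)" using t0 r by (simp add: field_simps)
    then show ?thesis using l2 by simp
  qed
qed

lemma lux3:
  assumes y: "young C" and K: "K > 0" and t0: "t0 > 0" "\<And>s. s \<ge> t0 \<Longrightarrow> K * s^2 \<le> C s"
    and r: "r \<ge> 64" "r \<ge> K * t0^2"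
  shows "ereal (sqrt K / 8) \<le> lux C 0 r (\<lambda>x. osc 0 r bb1 x * osc 0 r bb2 x)"
proof (rule lux_lower)
  fix l :: real assume l: "l > 0" and av: "avg 0 r (\<lambda>x. C (\<bar>osc 0 r bb1 x * osc 0 r bb2 x\<bar> / l)) \<le> 1"
  have "1 / r * C (sqrt r / (8*l)) \<le> avg 0 r (\<lambda>x. C (\<bar>osc 0 r bb1 x * osc 0 r bb2 x\<bar> / l))"
  proof (rule avg_lower[OF y, where M="sqrt r * 2 / l"])
    fix x :: real assume "x \<in> {0..r}"
    then have "\<bar>osc 0 r bb1 x\<bar> \<le> sqrt (r - 0)" using r by (intro osc1_bound) auto
    moreover have "\<bar>osc 0 r bb2 x\<bar> \<le> 2" using r by (intro osc2_bound) auto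
    ultimately have "\<bar>osc 0 r bb1 x * osc 0 r bb2 x\<bar> \<le> sqrt r * 2"
      using r by (simp add: abs_mult) (intro mult_mono, auto)
    then show "\<bar>osc 0 r bb1 x * osc 0 r bb2 x\<bar> / l \<le> sqrt r * 2 / l" using l by (simp add: divide_right_mono)
  next
    fix x :: real assume x: "x \<in> {0..1}"
    then have "sqrt r / 4 \<le> osc 0 r bb1 x" using r by (intro F1) auto
    moreover have "1/2 \<le> osc 0 r bb2 x" using r x by (intro F2) auto
    ultimately have "sqrt r / 4 * (1/2) \<le> osc 0 r bb1 x * osc 0 r bb2 x"
      by (intro mult_mono) (auto simp: osc_def)
    then have "sqrt r / 8 \<le> \<bar>osc 0 r bb1 x * osc 0 r bb2 x\<bar>" by simp
    then show "sqrt r / (8*l) \<le> \<bar>osc 0 r bb1 x * osc 0 r bb2 x\<bar> / l" using l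
      by (simp add: divide_right_mono flip: divide_divide_eq_left)
  qed (use r l in auto)
  then have "C (sqrt r / (8*l)) \<le> r * avg 0 r (\<lambda>x. C (\<bar>osc 0 r bb1 x * osc 0 r bb2 x\<bar> / l))" using r by (simp add: field_simps)
  also have "\<dots> \<le> r * 1" using av r by (intro mult_left_mono) auto
  finally have Cv: "C (sqrt r / (8*l)) \<le> r" by simp
  show "sqrt K / 8 \<le> l"
  proof (cases "sqrt r / (8*l) \<ge> t0")
    case True
    have "K * (sqrt r / (8*l))^2 \<le> r" using t0(2)[OF True] Cv by simp
    then have "K * r / (64 * l^2) \<le> r" using r by (simp add: power_divide power_mult_distrib)
    then have "K / 64 \<le> l^2" using l r by (simp add: field_simps power2_eq_square)
    then have "sqrt (K / 64) \<le> sqrt (l^2)" by (rule real_sqrt_le_mono)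
    then show ?thesis using l by (simp add: real_sqrt_divide)
  next
    case False
    then have l2: "sqrt r / (8 * t0) < l" using l t0 by (simp add: field_simps)
    have "sqrt (K * t0^2) \<le> sqrt r" using r by simp
    then have "sqrt K * t0 \<le> sqrt r" using t0 by (simp add: real_sqrt_mult)
    then have "sqrt K / 8 \<le> sqrt r / (8 * t0)" using t0 by (simp add: field_simps)
    then show ?thesis using l2 by simp
  qed
qed



lemma hilbert_out:
  fixes g :: "real \<Rightarrow> real"
  assumes g: "\<And>y. y \<notin> {0..1} \<Longrightarrow> g y = 0" and x: "x \<ge> 2"
  shows "hilbert g x = (LINT y|lborel. g y / (x - y))"
proof -
  have ev: "eventually (\<lambda>\<epsilon>. (LINT y:{y. \<epsilon> < \<bar>x - y\<bar>}|lborel. g y / (x - y)) = (LINT y|lborel. g y / (x - y))) (at_right 0)"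
  proof (rule eventually_mono[OF eventually_at_right_real[OF zero_less_one]])
    fix e :: real assume e: "e \<in> {0<..<1}"
    have "(\<lambda>y. indicator {y. e < \<bar>x - y\<bar>} y *\<^sub>R (g y / (x - y))) = (\<lambda>y. g y / (x - y))"
    proof
      fix y
      show "indicator {y. e < \<bar>x - y\<bar>} y *\<^sub>R (g y / (x - y)) = g y / (x - y)"
      proof (cases "e < \<bar>x - y\<bar>")
        case False
        then have "y \<notin> {0..1}" using e x by auto
        then show ?thesis using g by simp
      qed simp
    qed
    then show "(LINT y:{y. e < \<bar>x - y\<bar>}|lborel. g y / (x - y)) = (LINT y|lborel. g y / (x - y))"
      unfolding set_lebesgue_integral_def by simp
  qed
  show ?thesis unfolding hilbert_def
    by (rule tendsto_Lim[OF trivial_limit_at_right_real]) (rule tendsto_eventually[OF ev])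
qed

lemma comm_val:
  assumes x: "x \<ge> 2"
  shows "comm bb2 (comm bb1 hilbert) bb2 x
       = (LINT y|lborel. ((bb1 y - bb1 x) / (x - y)) * indicator {0..1} y)"
proof -
  have b2x: "bb2 x = 0" using x by (simp add: bb2_def)
  have gg: "(\<lambda>y. bb2 y * bb2 y) = (\<lambda>y. indicator {0..1} y)"
    by (auto simp: bb2_def split: split_indicator)
  have H1: "hilbert (\<lambda>y. indicator {0..1} y) x = (LINT y|lborel. (1 / (x - y)) * indicator {0..1} y)"
    by (subst hilbert_out[OF _ x]) (auto intro!: Bochner_Integration.integral_cong split: split_indicator)
  have H2: "hilbert (\<lambda>y. bb1 y * indicator {0..1} y) x = (LINT y|lborel. (bb1 y / (x - y)) * indicator {0..1} y)"
    by (subst hilbert_out[OF _ x]) (auto intro!: Bochner_Integration.integral_cong split: split_indicator)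
  have cont: "isCont (\<lambda>y. 1 / (x - y)) y" "isCont (\<lambda>y. bb1 y / (x - y)) y" if "y \<le> 1" for y
    using that x by (auto intro!: continuous_intros bb1_cont)
  have I1: "integrable lborel (\<lambda>y. (1 / (x - y)) * indicator {0..1} y)"
    by (rule borel_integrable_atLeastAtMost) (use cont in auto)
  have I2: "integrable lborel (\<lambda>y. (bb1 y / (x - y)) * indicator {0..1} y)"
    by (rule borel_integrable_atLeastAtMost) (use cont in auto)
  have "comm bb2 (comm bb1 hilbert) bb2 x
      = (LINT y|lborel. (bb1 y / (x - y)) * indicator {0..1} y) - bb1 x * (LINT y|lborel. (1 / (x - y)) * indicator {0..1} y)"
    unfolding comm_def b2x gg by (simp add: H1 H2)
  also have "\<dots> = (LINT y|lborel. (bb1 y / (x - y)) * indicator {0..1} y) - (LINT y|lborel. bb1 x * ((1 / (x - y)) * indicator {0..1} y))"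
    by (simp only: integral_mult_right_zero)
  also have "\<dots> = (LINT y|lborel. (bb1 y / (x - y)) * indicator {0..1} y - bb1 x * ((1 / (x - y)) * indicator {0..1} y))"
  proof (rule Bochner_Integration.integral_diff[symmetric])
    show "integrable lborel (\<lambda>y. bb1 x * (1 / (x - y) * indicator {0..1} y))"
      using I1 by (rule Bochner_Integration.integrable_mult_right)
  qed (rule I2)
  also have "\<dots> = (LINT y|lborel. ((bb1 y - bb1 x) / (x - y)) * indicator {0..1} y)"
    by (rule Bochner_Integration.integral_cong) (auto simp: diff_divide_distrib split: split_indicator)
  finally show ?thesis .
qed

lemma comm_bound:
  assumes x: "x \<ge> 2"
  shows "1 / (4 * x) \<le> (comm bb2 (comm bb1 hilbert) bb2 x)^2"
proof -
  have pt: "(bb1 y - bb1 x) / (x - y) \<le> - 1 / (2 * sqrt x)" if y: "y \<in> {0..1}" for y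
  proof -
    have sx: "sqrt x \<ge> 1" using x by simp
    have sy: "sqrt y \<le> 1" "sqrt y \<ge> 0" using y by auto
    have b: "bb1 y = sqrt y" "bb1 x = sqrt x" using x y by (auto simp: bb1_def)
    have "(sqrt x - sqrt y) * (sqrt x + sqrt y) = sqrt x * sqrt x - sqrt y * sqrt y"
      by (simp add: algebra_simps)
    then have xy: "x - y = (sqrt x - sqrt y) * (sqrt x + sqrt y)"
      using x y by simp
    have pos: "sqrt x - sqrt y > 0" using sx sy x y
      by (smt (verit) real_sqrt_le_iff real_sqrt_one)
    have gen: "(b - a) / ((a - b) * (a + b)) = - 1 / (a + b)" if "a - b > 0" "a + b > 0" for a b :: real
    proof -
      have e1: "(b - a) / (a - b) = -1" using that by (simp add: field_simps)
      show ?thesis unfolding divide_divide_eq_left[symmetric] e1 by simp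
    qed
    have "(bb1 y - bb1 x) / (x - y) = - 1 / (sqrt x + sqrt y)"
    proof -
      have "sqrt x + sqrt y > 0" using sx sy by linarith
      then show ?thesis unfolding b xy by (rule gen[OF pos])
    qed
    also have "\<dots> \<le> - 1 / (2 * sqrt x)"
    proof -
      have h: "sqrt x + sqrt y \<le> 2 * sqrt x" "0 < sqrt x + sqrt y" using sx sy by linarith+
      have "1 / (2 * sqrt x) \<le> 1 / (sqrt x + sqrt y)"
        by (rule divide_left_mono) (use h sx in \<open>auto intro!: mult_pos_pos\<close>)
      then show ?thesis by simp
    qed
    finally show ?thesis .
  qed
  have cont: "isCont (\<lambda>y. (bb1 y - bb1 x) / (x - y)) y" if "y \<le> 1" for y
    using that x by (auto intro!: continuous_intros bb1_cont)
  have conv: "(LINT y|lborel. h y * indicator {0..1} y) = (LINT y:{0..1}|lborel. h y)" for h :: "real \<Rightarrow> real"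
    unfolding set_lebesgue_integral_def by (simp add: mult.commute)
  have "comm bb2 (comm bb1 hilbert) bb2 x \<le> (LINT y:{0..1::real}|lborel. (- 1 / (2 * sqrt x)))"
    unfolding comm_val[OF x] conv
  proof (rule set_integral_mono[of lborel "{0..1}" "\<lambda>y. (bb1 y - bb1 x) / (x - y)" "\<lambda>y. - 1 / (2 * sqrt x)"])
    show "set_integrable lborel {0..1} (\<lambda>y. (bb1 y - bb1 x) / (x - y))"
      by (rule borel_integrable_atLeastAtMost') (use cont in \<open>auto intro!: continuous_at_imp_continuous_on\<close>)
    show "set_integrable lborel {0..1::real} (\<lambda>y. (- 1 / (2 * sqrt x)))"
      by (rule borel_integrable_atLeastAtMost') auto
    fix y :: real assume "y \<in> {0..1}"
    then show "(bb1 y - bb1 x) / (x - y) \<le> (- 1 / (2 * sqrt x))"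
      using pt[of y] by auto
  qed
  also have "\<dots> = - 1 / (2 * sqrt x)" by (simp add: set_integral_const)
  finally have c: "comm bb2 (comm bb1 hilbert) bb2 x \<le> - 1 / (2 * sqrt x)" .
  have sx: "sqrt x > 0" using x by simp
  have "1 / (2 * sqrt x) \<le> \<bar>comm bb2 (comm bb1 hilbert) bb2 x\<bar>" using c by linarith
  then have "(1 / (2 * sqrt x))^2 \<le> \<bar>comm bb2 (comm bb1 hilbert) bb2 x\<bar>^2"
    using sx by (intro power_mono) auto
  then have "(1 / (2 * sqrt x))^2 \<le> (comm bb2 (comm bb1 hilbert) bb2 x)^2" by simp
  moreover have "(1 / (2 * sqrt x))^2 = 1 / (4 * x)" using x by (simp add: power_divide power_mult_distrib)
  ultimately show ?thesis by simp
qed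



lemma Linf1: "Linf_loc bb1"
  unfolding Linf_loc_def
proof (intro conjI allI)
  show "bb1 \<in> borel_measurable lborel" by simp
  fix a c :: real
  show "\<exists>M. AE x in lborel. x \<in> {a..c} \<longrightarrow> \<bar>bb1 x\<bar> \<le> M"
    by (rule exI[of _ "bb1 c"]) (auto simp: bb1_def)
qed

lemma Linf2: "Linf_loc bb2"
  unfolding Linf_loc_def
proof (intro conjI allI)
  show "bb2 \<in> borel_measurable lborel" by simp
  fix a c :: real
  show "\<exists>M. AE x in lborel. x \<in> {a..c} \<longrightarrow> \<bar>bb2 x\<bar> \<le> M"
    by (rule exI[of _ 1]) (auto simp: bb2_def)
qed

lemma S2_le: "S2 bb1 bb2 \<le> 1"
  unfolding S2_def by (rule SUP_least) (auto dest: S2T2_pt(1))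

lemma T2_le: "T2 bb1 bb2 \<le> 1"
  unfolding T2_def by (rule SUP_least) (auto dest: S2T2_pt(2))

lemma SAB_inf:
  assumes "young A" "young B" "B2 (conj_young A)" "B2 (conj_young B)"
  shows "SAB A B bb1 bb2 = \<infinity>"
proof (rule ereal_top)
  fix M :: real
  obtain c where c: "c > 0" "\<And>r. r \<ge> 64 \<Longrightarrow> ereal (sqrt r / (4*c)) \<le> lux A 0 r (osc 0 r bb1)"
    using lux1[OF assms(1,3)] by blast
  define K where "K = (8 * c * (\<bar>M\<bar> + 1))^2"
  have K0: "K > 0" using c by (simp add: K_def)
  have sK: "sqrt K = 8 * c * (\<bar>M\<bar> + 1)" using c unfolding K_def by simp
  obtain t0 where t0: "t0 > 0" "\<And>s. s \<ge> t0 \<Longrightarrow> K * s^2 \<le> B s"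
    using superquad[OF assms(2,4) K0] by blast
  define r where "r = max 64 (K * t0^2)"
  have r: "r \<ge> 64" "r \<ge> K * t0^2" "r \<ge> 2" by (auto simp: r_def)
  have l2: "ereal (sqrt K / (2 * sqrt r)) \<le> lux B 0 r (osc 0 r bb2)"
    by (rule lux2[OF assms(2) K0 t0 r(3) r(2)])
  have "ereal M \<le> ereal (sqrt r / (4*c)) * ereal (sqrt K / (2 * sqrt r))"
  proof -
    have "sqrt r / (4*c) * (sqrt K / (2 * sqrt r)) = sqrt K / (8 * c)"
      using r c by (simp add: field_simps)
    also have "\<dots> = \<bar>M\<bar> + 1" using sK c by simp
    finally show ?thesis by simp
  qed
  also have "\<dots> \<le> lux A 0 r (osc 0 r bb1) * lux B 0 r (osc 0 r bb2)"
    by (intro ereal_mult_mono') (use c(2)[OF r(1)] l2 r c K0 in auto)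
  also have "\<dots> \<le> SAB A B bb1 bb2"
    unfolding SAB_def by (rule SUP_upper2[of "(0, r)"]) (use r in auto)
  finally show "ereal M \<le> SAB A B bb1 bb2" .
qed

lemma TC_inf:
  assumes "young C" "B2 (conj_young C)"
  shows "TC C bb1 bb2 = \<infinity>"
proof (rule ereal_top)
  fix M :: real
  define K where "K = (8 * (\<bar>M\<bar> + 1))^2"
  have K0: "K > 0" by (simp add: K_def)
  have sK: "sqrt K = 8 * (\<bar>M\<bar> + 1)" unfolding K_def by simp
  obtain t0 where t0: "t0 > 0" "\<And>s. s \<ge> t0 \<Longrightarrow> K * s^2 \<le> C s"
    using superquad[OF assms K0] by blast
  define r where "r = max 64 (K * t0^2)"
  have r: "r \<ge> 64" "r \<ge> K * t0^2" by (auto simp: r_def)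
  have "ereal M \<le> ereal (sqrt K / 8)" using sK by simp
  also have "\<dots> \<le> lux C 0 r (\<lambda>x. osc 0 r bb1 x * osc 0 r bb2 x)"
    by (rule lux3[OF assms(1) K0 t0 r])
  also have "\<dots> \<le> TC C bb1 bb2"
    unfolding TC_def by (rule SUP_upper2[of "(0, r)"]) (use r in auto)
  finally show "ereal M \<le> TC C bb1 bb2" .
qed

lemma comm_unbounded:
  "\<not> (\<exists>K::real. \<forall>f. f \<in> borel_measurable lborel \<and> bounded (range f) \<and>
           (\<exists>R. \<forall>x. R < \<bar>x\<bar> \<longrightarrow> f x = 0) \<longrightarrow>
         (\<integral>\<^sup>+ x. ennreal ((comm bb2 (comm bb1 hilbert) f x)\<^sup>2) \<partial>lborel)
           \<le> ennreal K * (\<integral>\<^sup>+ x. ennreal ((f x)\<^sup>2) \<partial>lborel))"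
proof
  assume "\<exists>K::real. \<forall>f. f \<in> borel_measurable lborel \<and> bounded (range f) \<and>
           (\<exists>R. \<forall>x. R < \<bar>x\<bar> \<longrightarrow> f x = 0) \<longrightarrow>
         (\<integral>\<^sup>+ x. ennreal ((comm bb2 (comm bb1 hilbert) f x)\<^sup>2) \<partial>lborel)
           \<le> ennreal K * (\<integral>\<^sup>+ x. ennreal ((f x)\<^sup>2) \<partial>lborel)"
  then obtain K :: real where K: "\<And>f. f \<in> borel_measurable lborel \<and> bounded (range f) \<and>
           (\<exists>R. \<forall>x. R < \<bar>x\<bar> \<longrightarrow> f x = 0) \<Longrightarrow>
         (\<integral>\<^sup>+ x. ennreal ((comm bb2 (comm bb1 hilbert) f x)\<^sup>2) \<partial>lborel)
           \<le> ennreal K * (\<integral>\<^sup>+ x. ennreal ((f x)\<^sup>2) \<partial>lborel)" by blast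
  have bnd: "bounded (range bb2)"
    unfolding bounded_iff by (rule exI[of _ 1]) (auto simp: bb2_def)
  have supp: "\<exists>R. \<forall>x. R < \<bar>x\<bar> \<longrightarrow> bb2 x = 0"
    by (rule exI[of _ 1]) (auto simp: bb2_def split: split_indicator)
  have f2: "(\<integral>\<^sup>+ x. ennreal ((bb2 x)\<^sup>2) \<partial>lborel) = 1"
  proof -
    have "(\<lambda>x. ennreal ((bb2 x)\<^sup>2)) = indicator {0..1}"
      by (auto simp: bb2_def split: split_indicator)
    then show ?thesis by simp
  qed
  have Kb: "(\<integral>\<^sup>+ x. ennreal ((comm bb2 (comm bb1 hilbert) bb2 x)\<^sup>2) \<partial>lborel) \<le> ennreal K"
  proof -
    have m: "bb2 \<in> borel_measurable lborel" by simp
    have "(\<integral>\<^sup>+ x. ennreal ((comm bb2 (comm bb1 hilbert) bb2 x)\<^sup>2) \<partial>lborel)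
       \<le> ennreal K * (\<integral>\<^sup>+ x. ennreal ((bb2 x)\<^sup>2) \<partial>lborel)"
      by (rule K) (intro conjI m bnd supp)
    then show ?thesis unfolding f2 by simp
  qed
  have low: "ennreal ((ln (2 + real n) - ln 2) / 4)
      \<le> (\<integral>\<^sup>+ x. ennreal ((comm bb2 (comm bb1 hilbert) bb2 x)\<^sup>2) \<partial>lborel)" for n :: nat
  proof -
    have "(\<integral>\<^sup>+x. ennreal (1 / (4 * x)) * indicator {2 .. 2 + real n} x \<partial>lborel)
        = ennreal (ln (2 + real n) / 4 - ln 2 / 4)"
    proof (rule nn_integral_FTC_Icc[where F="\<lambda>x. ln x / 4"])
      fix x :: real assume "x \<in> {2..2 + real n}"
      then show "((\<lambda>x. ln x / 4) has_real_derivative 1 / (4 * x)) (at x)"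
        by (auto intro!: derivative_eq_intros)
    qed auto
    also have "\<dots> = ennreal ((ln (2 + real n) - ln 2) / 4)" by (simp add: diff_divide_distrib)
    finally have eq: "(\<integral>\<^sup>+x. ennreal (1 / (4 * x)) * indicator {2 .. 2 + real n} x \<partial>lborel)
        = ennreal ((ln (2 + real n) - ln 2) / 4)" .
    have "(\<integral>\<^sup>+x. ennreal (1 / (4 * x)) * indicator {2 .. 2 + real n} x \<partial>lborel)
        \<le> (\<integral>\<^sup>+ x. ennreal ((comm bb2 (comm bb1 hilbert) bb2 x)\<^sup>2) \<partial>lborel)"
    proof (rule nn_integral_mono)
      fix x :: real
      show "ennreal (1 / (4 * x)) * indicator {2 .. 2 + real n} x \<le> ennreal ((comm bb2 (comm bb1 hilbert) bb2 x)\<^sup>2)"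
      proof (cases "x \<in> {2 .. 2 + real n}")
        case True
        then show ?thesis using comm_bound[of x] by (auto intro: ennreal_leI)
      qed simp
    qed
    then show ?thesis using eq by simp
  qed
  define n :: nat where "n = nat (ceiling (exp (4 * \<bar>K\<bar> + 1)))"
  have "exp (4 * \<bar>K\<bar> + 1) \<le> real n" unfolding n_def by linarith
  then have "exp (4 * \<bar>K\<bar> + 1) < 2 + real n" by simp
  then have "ln (exp (4 * \<bar>K\<bar> + 1)) < ln (2 + real n)"
    by (subst ln_less_cancel_iff) auto
  then have "4 * \<bar>K\<bar> + 1 < ln (2 + real n)" by simp
  moreover have "ln (2::real) < 1" using ln_2_less_1 by simp
  ultimately have lt: "\<bar>K\<bar> < (ln (2 + real n) - ln 2) / 4" by simp
  have "ennreal ((ln (2 + real n) - ln 2) / 4) \<le> ennreal K" using low[of n] Kb by (rule order_trans)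
  also have "\<dots> \<le> ennreal \<bar>K\<bar>" by (rule ennreal_leI) simp
  finally have "(ln (2 + real n) - ln 2) / 4 \<le> \<bar>K\<bar>" by (subst (asm) ennreal_le_iff) auto
  then show False using lt by simp
qed

theorem theorem4p5:
  shows "\<exists>b1 b2. Linf_loc b1 \<and> Linf_loc b2 \<and> S2 b1 b2 + T2 b1 b2 < \<infinity> \<and>
    (\<forall>A B. young A \<and> young B \<and> B2 (conj_young A) \<and> B2 (conj_young B) \<longrightarrow> SAB A B b1 b2 = \<infinity>) \<and>
    (\<forall>C. young C \<and> B2 (conj_young C) \<longrightarrow> TC C b1 b2 = \<infinity>) \<and>
    \<not> (\<exists>K::real. \<forall>f. f \<in> borel_measurable lborel \<and> bounded (range f) \<and>
           (\<exists>R. \<forall>x. R < \<bar>x\<bar> \<longrightarrow> f x = 0) \<longrightarrow>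
         (\<integral>\<^sup>+ x. ennreal ((comm b2 (comm b1 hilbert) f x)\<^sup>2) \<partial>lborel)
           \<le> ennreal K * (\<integral>\<^sup>+ x. ennreal ((f x)\<^sup>2) \<partial>lborel))"
proof -
  have "S2 bb1 bb2 + T2 bb1 bb2 \<le> 1 + 1" using S2_le T2_le by (rule add_mono)
  then have fin: "S2 bb1 bb2 + T2 bb1 bb2 < \<infinity>" by (auto simp: le_less_trans)
  show ?thesis
    apply (rule exI[of _ bb1], rule exI[of _ bb2])
    apply (intro conjI allI impI)
         apply (rule Linf1)
        apply (rule Linf2)
       apply (rule fin)
      apply (rule SAB_inf; simp)
     apply (rule TC_inf; simp)
    apply (rule comm_unbounded)
    done
qed

end
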